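(* The following identities hold: \begin{align*}\sum_{k=1}^\infty\frac{11319k^2-497k-746}{(4k+1)(-2)^k\binom{4k}k}&=48\log2-246, \\\sum_{k=1}^\infty\frac{39083k^2-2829k-3106}{(4k+1)(-24)^k\binom{4k}k}&=-94-64\log\frac23, \\\sum_{k=1}^\infty\frac{442611k^2+41347k-17434}{(4k+1)(-192)^k\binom{4k}k}&=26+512\log\frac34. \end{align*} *)

theory Defs
  imports Complex_Main
begin

end

theory Submission
  imports Defs "HOL-Analysis.Analysis"
begin

definition TT :: "real \<Rightarrow> real \<Rightarrow> real \<Rightarrow> real \<Rightarrow> real \<Rightarrow> real" where
  "TT a b c y m = (1-y)^2*(a*m^2 + b*m + c) + 2*a*y*(1-y)*m + (a+b)*y + (a-b)*y^2"

lemma TT_step: "TT a b c y m - y * TT a b c y (m+1) = (1-y)^3 * (a*m^2+b*m+c)"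
  unfolding TT_def by (simp add: algebra_simps power2_eq_square power3_eq_cube)

lemma lim2:
  fixes y :: real assumes "\<bar>y\<bar> < 1"
  shows "(\<lambda>n. real n^2 * y^n) \<longlonglongrightarrow> 0"
proof -
  define r where "r = sqrt \<bar>y\<bar>"
  have r: "norm r < 1" using assms unfolding r_def by (simp add: real_sqrt_lt_1_iff)
  have rn: "(\<lambda>n. real n * r^n) \<longlonglongrightarrow> 0" using powser_times_n_limit_0[of r] r by auto
  have "(\<lambda>n. (real n * r^n) * (real n * r^n)) \<longlonglongrightarrow> 0 * 0" using tendsto_mult[OF rn rn] by simp
  moreover have "(real n * r^n) * (real n * r^n) = norm (real n^2 * y^n)" for n
  proof -
    have rr: "r * r = \<bar>y\<bar>" unfolding r_def by (simp add: real_sqrt_mult_self)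
    have "r^n * r^n = \<bar>y\<bar>^n" by (simp add: power_mult_distrib[symmetric] rr)
    then show ?thesis by (simp add: power2_eq_square abs_mult power_abs algebra_simps)
  qed
  ultimately have "(\<lambda>n. norm (real n^2 * y^n)) \<longlonglongrightarrow> 0" by simp
  then show ?thesis by (simp only: tendsto_norm_zero_iff)
qed

lemma lim1:
  fixes y :: real assumes "\<bar>y\<bar> < 1"
  shows "(\<lambda>n. real n * y^n) \<longlonglongrightarrow> 0"
  using powser_times_n_limit_0[of y] assms by simp

lemma ser:
  fixes a b c y :: real
  assumes "\<bar>y\<bar> < 1"
  shows "(\<lambda>i. (a*real(i+1)^2 + b*real(i+1) + c) * y^(i+1)) sums (y * TT a b c y 1 / (1-y)^3)"
proof -
  have y1: "(1-y)^3 \<noteq> 0" using assms by auto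
  have ps: "(\<Sum>i<n. (a*real(i+1)^2 + b*real(i+1) + c) * y^(i+1))
      = (y * TT a b c y 1 - y^(n+1) * TT a b c y (real n + 1)) / (1-y)^3" for n
  proof (induction n)
    case 0
    then show ?case by simp
  next
    case (Suc n)
    have st: "TT a b c y (real n + 1) - y * TT a b c y (real n + 1 + 1) = (1-y)^3 * (a*(real n + 1)^2+b*(real n + 1)+c)"
      by (rule TT_step)
    have "(\<Sum>i<Suc n. (a*real(i+1)^2 + b*real(i+1) + c) * y^(i+1))
       = (y * TT a b c y 1 - y^(n+1) * TT a b c y (real n + 1)) / (1-y)^3 + (a*real(n+1)^2 + b*real(n+1) + c) * y^(n+1)"
      using Suc by simp
    also have "\<dots> = (y * TT a b c y 1 - y^(n+1) * (TT a b c y (real n + 1) - (1-y)^3 * (a*(real n + 1)^2+b*(real n + 1)+c))) / (1-y)^3"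
      using y1 by (simp add: field_simps)
    also have "\<dots> = (y * TT a b c y 1 - y^(Suc n+1) * TT a b c y (real (Suc n) + 1)) / (1-y)^3"
      using st by (simp add: algebra_simps)
    finally show ?case .
  qed
  have e: "y^(n+1) * TT a b c y (real n + 1) =
     (1-y)^2*a * (real (Suc n)^2 * y^(Suc n)) + ((1-y)^2*b + 2*a*y*(1-y)) * (real (Suc n) * y^(Suc n))
     + ((1-y)^2*c + (a+b)*y + (a-b)*y^2) * y^(Suc n)" for n
    unfolding TT_def by (simp add: algebra_simps)
  have l: "(\<lambda>n. y^(n+1) * TT a b c y (real n + 1)) \<longlonglongrightarrow>
      (1-y)^2*a * 0 + ((1-y)^2*b + 2*a*y*(1-y)) * 0 + ((1-y)^2*c + (a+b)*y + (a-b)*y^2) * 0"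
    unfolding e
    by (intro tendsto_intros LIMSEQ_Suc[OF lim2[OF assms]] LIMSEQ_Suc[OF lim1[OF assms]]
         LIMSEQ_Suc[OF LIMSEQ_power_zero] ) (use assms in simp)
  have "(\<lambda>n. (y * TT a b c y 1 - y^(n+1) * TT a b c y (real n + 1)) / (1-y)^3) \<longlonglongrightarrow> (y * TT a b c y 1 - 0) / (1-y)^3"
    using l y1 by (intro tendsto_intros) auto
  then show ?thesis unfolding sums_def ps by simp
qed
lemma beta_nat:
  "((\<lambda>t::real. (t*(1-t)^3)^n) has_integral (1 / ((4*real n+1) * real ((4*n) choose n)))) {0..1}"
proof -
  have h: "((\<lambda>t. t powr (real n + 1 - 1) * (1 - t) powr (3*real n + 1 - 1)) has_integral Beta (real n + 1) (3*real n + 1)) {0..1}"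
    by (rule has_integral_Beta_real) auto
  have B: "Beta (real n + 1) (3*real n + 1) = 1 / ((4*real n+1) * real ((4*n) choose n))"
  proof -
    have g1: "Gamma (real n + 1) = fact n" using Gamma_fact[of n] by (simp add: add.commute)
    have g2: "Gamma (3*real n + 1) = fact (3*n)" using Gamma_fact[of "3*n"] by (simp add: add.commute)
    have g3: "Gamma (real n + 1 + (3*real n + 1)) = fact (4*n+1)" using Gamma_fact[of "4*n+1"] by (simp add: add.commute algebra_simps)
    have c: "real ((4*n) choose n) = fact (4*n) / (fact n * fact (3*n))"
      using binomial_fact[of n "4*n", where 'a=real] by simp
    have f: "(fact (4*n+1) :: real) = (4*real n + 1) * fact (4*n)"
      by (simp add: algebra_simps)
    show ?thesis unfolding Beta_def g1 g2 g3 c f by (simp add: field_simps)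
  qed
  have h2: "((\<lambda>t. t powr (real n + 1 - 1) * (1 - t) powr (3*real n + 1 - 1)) has_integral Beta (real n + 1) (3*real n + 1)) {0<..<1}"
    using h by (simp add: has_integral_Icc_iff_Ioo)
  have h3: "((\<lambda>t::real. (t*(1-t)^3)^n) has_integral Beta (real n + 1) (3*real n + 1)) {0<..<1}"
  proof (rule has_integral_eq[OF _ h2])
    fix t :: real assume "t \<in> {0<..<1}"
    then have "0 < t" "0 < 1 - t" by auto
    moreover have "(1 - t) powr (3*real n) = (1-t)^(3*n)"
      using \<open>0 < 1 - t\<close> by (metis of_nat_mult of_nat_numeral powr_realpow)
    ultimately show "t powr (real n + 1 - 1) * (1 - t) powr (3*real n + 1 - 1) = (t*(1-t)^3)^n"
      by (simp add: powr_realpow power_mult_distrib power_mult[symmetric] mult.commute[of 3 n])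
  qed
  show ?thesis using h3 B by (simp add: has_integral_Icc_iff_Ioo)
qed

lemma sq_le_4pow: "(m::nat)^2 \<le> 4^m"
proof (induction m)
  case 0 then show ?case by simp
next
  case (Suc m)
  show ?case
  proof (cases "m = 0")
    case True then show ?thesis by simp
  next
    case False
    then have "(Suc m)^2 \<le> 4 * m^2" by (cases m) (auto simp: power2_eq_square algebra_simps)
    also have "\<dots> \<le> 4 * 4^m" using Suc by simp
    finally show ?thesis by simp
  qed
qed

lemma Ybound:
  fixes x t :: real assumes x: "\<bar>x\<bar> \<ge> 2" and t: "t \<in> {0..1}"
  shows "\<bar>t*(1-t)^3/x\<bar> \<le> 1/8"
proof -
  have t0: "0 \<le> t" "t \<le> 1" using t by auto
  have s: "0 \<le> (2*t-1)^2" by simp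
  have "4*(t*(1-t)) \<le> 1" using s by (simp add: power2_eq_square algebra_simps)
  then have a: "t*(1-t) \<le> 1/4" by linarith
  have b: "(1-t)^2 \<le> 1" using t0 by (simp add: power_le_one)
  have c0: "0 \<le> t*(1-t)" using t0 by simp
  have "t*(1-t)^3 = (t*(1-t))*(1-t)^2" by (simp add: power2_eq_square power3_eq_cube)
  also have "\<dots> \<le> 1/4 * 1" using a b c0 by (intro mult_mono) auto
  finally have u: "t*(1-t)^3 \<le> 1/4" by simp
  have u0: "0 \<le> t*(1-t)^3" using t0 by simp
  have "\<bar>t*(1-t)^3/x\<bar> = t*(1-t)^3 / \<bar>x\<bar>" using u0 by (simp add: abs_div_pos abs_divide)
  also have "\<dots> \<le> (1/4) / 2" using u u0 x by (intro frac_le) auto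
  finally show ?thesis by simp
qed


lemma main_gen:
  fixes a b c x :: real and F :: "real \<Rightarrow> real"
  assumes x: "\<bar>x\<bar> \<ge> 2"
  and der: "\<And>t. t \<in> {0..1} \<Longrightarrow> (F has_real_derivative
      ((t*(1-t)^3/x) * TT a b c (t*(1-t)^3/x) 1 / (1 - t*(1-t)^3/x)^3)) (at t within {0..1})"
  shows "(\<lambda>k. (a*real(k+1)^2 + b*real(k+1) + c) /
           ((4*real(k+1)+1) * x^(k+1) * real((4*(k+1)) choose (k+1)))) sums (F 1 - F 0)"
proof -
  define Y where "Y t = t*(1-t)^3/x" for t
  define P where "P m = a*real m^2 + b*real m + c" for m
  define tm where "tm k = (a*real(k+1)^2 + b*real(k+1) + c) /
           ((4*real(k+1)+1) * x^(k+1) * real((4*(k+1)) choose (k+1)))" for k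
  define R where "R t = Y t * TT a b c (Y t) 1 / (1 - Y t)^3" for t
  define f where "f n t = (\<Sum>i<n. P (i+1) * Y t^(i+1))" for n t
  define g where "g t = (\<Sum>i. P (i+1) * Y t^(i+1))" for t
  have x0: "x \<noteq> 0" using x by auto
  have Yb: "\<bar>Y t\<bar> \<le> 1/8" if "t \<in> {0..1}" for t unfolding Y_def using Ybound[OF x that] .
  have int1: "((\<lambda>t. P (k+1) * Y t^(k+1)) has_integral tm k) {0..1}" for k
  proof -
    have "((\<lambda>t. (P (k+1) / x^(k+1)) * (t*(1-t)^3)^(k+1)) has_integral
          (P (k+1) / x^(k+1)) * (1 / ((4*real (k+1)+1) * real ((4*(k+1)) choose (k+1))))) {0..1}"
      by (rule has_integral_mult_right[OF beta_nat])
    moreover have "(P (k+1) / x^(k+1)) * (1 / ((4*real (k+1)+1) * real ((4*(k+1)) choose (k+1)))) = tm k"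
      unfolding tm_def P_def by (simp add: field_simps)
    moreover have "(P (k+1) / x^(k+1)) * (t*(1-t)^3)^(k+1) = P (k+1) * Y t^(k+1)" for t
      unfolding Y_def by (simp add: power_divide)
    ultimately show ?thesis by simp
  qed
  have intf: "(f n has_integral (\<Sum>i<n. tm i)) {0..1}" for n
    unfolding f_def by (intro has_integral_sum finite_lessThan int1)
  have bnd: "norm (P (i+1) * Y t^(i+1)) \<le> (\<bar>a\<bar>+\<bar>b\<bar>+\<bar>c\<bar>) * (1/2)^(i+1)" if t: "t \<in> {0..1}" for i t
  proof -
    define m where "m = i+1"
    have m1: "1 \<le> real m" unfolding m_def by simp
    have "\<bar>P m\<bar> \<le> \<bar>a\<bar>*real m^2 + \<bar>b\<bar>*real m + \<bar>c\<bar>"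
      unfolding P_def by (rule order.trans[OF abs_triangle_ineq] add_mono order.trans[OF abs_triangle_ineq])+
        (auto simp: abs_mult)
    also have "\<dots> \<le> (\<bar>a\<bar>+\<bar>b\<bar>+\<bar>c\<bar>) * real m^2"
    proof -
      have "real m \<le> real m^2" using m1 by (simp add: power2_eq_square)
      moreover have "1 \<le> real m^2" using m1 by (simp add: one_le_power)
      ultimately have "\<bar>b\<bar>*real m \<le> \<bar>b\<bar>*real m^2" "\<bar>c\<bar> \<le> \<bar>c\<bar>*real m^2"
        by (auto intro: mult_left_mono[of _ _ "\<bar>b\<bar>", simplified] mult_left_mono[of 1 _ "\<bar>c\<bar>", simplified])
      then show ?thesis by (simp add: algebra_simps)
    qed
    finally have p: "\<bar>P m\<bar> \<le> (\<bar>a\<bar>+\<bar>b\<bar>+\<bar>c\<bar>) * real m^2" .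
    have yp: "\<bar>Y t\<bar>^m \<le> (1/8)^m" using Yb[OF t] by (intro power_mono) auto
    have m4: "real m^2 \<le> 4^m" using sq_le_4pow[of m] by (metis of_nat_le_iff of_nat_numeral of_nat_power)
    have "norm (P m * Y t^m) = \<bar>P m\<bar> * \<bar>Y t\<bar>^m" by (simp add: abs_mult power_abs)
    also have "\<dots> \<le> ((\<bar>a\<bar>+\<bar>b\<bar>+\<bar>c\<bar>) * real m^2) * (1/8)^m"
      using p yp by (intro mult_mono) auto
    also have "\<dots> \<le> ((\<bar>a\<bar>+\<bar>b\<bar>+\<bar>c\<bar>) * 4^m) * (1/8)^m"
      using m4 by (intro mult_right_mono mult_left_mono) auto
    also have "\<dots> = (\<bar>a\<bar>+\<bar>b\<bar>+\<bar>c\<bar>) * (1/2)^m"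
      by (simp add: power_divide field_simps flip: power_mult_distrib)
    finally show ?thesis unfolding m_def .
  qed
  have summ: "summable (\<lambda>i. (\<bar>a\<bar>+\<bar>b\<bar>+\<bar>c\<bar>) * (1/2::real)^(i+1))"
    by (intro summable_mult summable_ignore_initial_segment[where k=1, simplified] summable_geometric) auto
  have ul: "uniform_limit {0..1} f g sequentially"
    unfolding f_def g_def by (rule Weierstrass_m_test[OF _ summ]) (use bnd in auto)
  have cont: "continuous_on {0..1} (f n)" for n
    unfolding f_def Y_def by (intro continuous_intros) (use x0 in auto)
  obtain I J where I: "\<And>n. (f n has_integral I n) {0..1}" and J: "(g has_integral J) {0..1}"
    and IJ: "I \<longlonglongrightarrow> J"
    using uniform_limit_integral[OF ul cont] by auto
  have In: "I n = (\<Sum>i<n. tm i)" for n using has_integral_unique[OF I intf] .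
  have gR: "g t = R t" if "t \<in> {0..1}" for t
  proof -
    have "\<bar>Y t\<bar> < 1" using Yb[OF that] by simp
    from ser[OF this, of a b c] show ?thesis unfolding g_def R_def P_def by (simp add: sums_iff)
  qed
  have ftc: "(R has_integral (F 1 - F 0)) {0..1}"
  proof (rule fundamental_theorem_of_calculus)
    fix t :: real assume "t \<in> {0..1}"
    from der[OF this] show "(F has_vector_derivative R t) (at t within {0..1})"
      unfolding R_def Y_def has_real_derivative_iff_has_vector_derivative .
  qed simp
  have "(g has_integral (F 1 - F 0)) {0..1}"
    by (rule has_integral_eq[OF _ ftc]) (simp add: gR)
  then have "J = F 1 - F 0" using has_integral_unique[OF J] by simp
  moreover have "I = (\<lambda>n. \<Sum>i<n. tm i)" using In by auto
  ultimately have "(\<lambda>n. \<Sum>i<n. tm i) \<longlonglongrightarrow> F 1 - F 0" using IJ by simp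
  then show ?thesis unfolding sums_def tm_def .
qed


lemma gen_der:
  fixes B Bp D Dp C Cp :: "real \<Rightarrow> real" and a b c x q c1 c2 r s1 s2 t :: real
  assumes dB: "\<And>t. (B has_real_derivative Bp t) (at t)"
  and dD: "\<And>t. (D has_real_derivative Dp t) (at t)"
  and dC: "\<And>t. (C has_real_derivative Cp t) (at t)"
  and Dfac: "\<And>t. D t = (t - r) * C t"
  and Dx: "\<And>t. D t = x - t*(1-t)^3"
  and x0: "x \<noteq> 0"
  and iden: "\<And>t. x^3*(t*(1-t)^3/x) * TT a b c (t*(1-t)^3/x) 1 =
       q*D t^3 + Bp t*D t - 2*B t*Dp t + (c1*C t + c2*Cp t*(t-r))*D t^2"
  and pos1: "s1*(t-r) > 0" and pos2: "s2 * C t > 0"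
  shows "((\<lambda>t. q*t + B t/D t^2 + c1*ln(s1*(t-r)) + c2*ln(s2*C t)) has_real_derivative
     ((t*(1-t)^3/x) * TT a b c (t*(1-t)^3/x) 1 / (1 - t*(1-t)^3/x)^3)) (at t within S)"
proof -
  have s1: "s1 \<noteq> 0" "t - r \<noteq> 0" using pos1 by auto
  have s2: "s2 \<noteq> 0" "C t \<noteq> 0" using pos2 by auto
  have D0: "D t \<noteq> 0" using Dfac[of t] s1 s2 by simp
  have d: "((\<lambda>t. q*t + B t/D t^2 + c1*ln(s1*(t-r)) + c2*ln(s2*C t)) has_real_derivative
      (q + (Bp t * D t^2 - B t * (2 * D t * Dp t))/(D t^2)^2 + c1 * (s1 / (s1*(t-r))) + c2 * (s2 * Cp t / (s2 * C t)))) (at t)"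
    using pos1 pos2 D0
    by (auto intro!: derivative_eq_intros dB dD dC simp: power2_eq_square mult_ac)
  have e1: "q + (Bp t * D t^2 - B t * (2 * D t * Dp t))/(D t^2)^2 + c1 * (s1 / (s1*(t-r))) + c2 * (s2 * Cp t / (s2 * C t))
      = (q*D t^3 + Bp t*D t - 2*B t*Dp t + (c1*C t + c2*Cp t*(t-r))*D t^2) / D t^3"
  proof -
    have r3: "z*D t^2/D t^3 = z/D t" for z using D0 by (simp add: power2_eq_square power3_eq_cube)
    have a1: "c1 * (s1 / (s1*(t-r))) = c1*C t*D t^2/D t^3"
      unfolding r3 using s1 s2 by (simp add: Dfac[of t])
    have a2: "c2 * (s2 * Cp t / (s2 * C t)) = c2*Cp t*(t-r)*D t^2/D t^3"
      unfolding r3 using s1 s2 by (simp add: Dfac[of t])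
    have a3: "(Bp t * D t^2 - B t * (2 * D t * Dp t))/(D t^2)^2 = (Bp t*D t - 2*B t*Dp t)/D t^3"
      using D0 by (simp add: field_simps power2_eq_square power3_eq_cube)
    show ?thesis unfolding a1 a2 a3 using D0 by (simp add: field_simps)
  qed
  have e2: "(t*(1-t)^3/x) * TT a b c (t*(1-t)^3/x) 1 / (1 - t*(1-t)^3/x)^3
      = x^3*(t*(1-t)^3/x) * TT a b c (t*(1-t)^3/x) 1 / D t^3"
  proof -
    have "1 - t*(1-t)^3/x = D t / x" using Dx[of t] x0 by (simp add: field_simps)
    then show ?thesis using x0 D0 by (simp add: power_divide)
  qed
  show ?thesis using d unfolding e1 e2 iden[of t, symmetric]
    by (rule has_field_derivative_at_within)
qed

lemma "((\<lambda>t::real. (2976 - 128*t - 21310*t^2 + 37524*t^3 - 27108*t^4 + 6832*t^5 + 282*t^6 - 60*t^7)) has_real_derivative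
   (- 128 - 2*21310*t + 3*37524*t^2 - 4*27108*t^3 + 5*6832*t^4 + 6*282*t^5 - 7*60*t^6)) (at t)"
  by (auto intro!: derivative_eq_intros)


lemma iden1: "(-2)^3*(t*(1-t)^3/(-2)) * TT 11319 (-497) (-746) (t*(1-t)^3/(-2)) 1 =
       746*(- 2 - t + 3*t^2 - 3*t^3 + t^4)^3 + (- 128 - 42620*t + 112572*t^2 - 108432*t^3 + 34160*t^4 + 1692*t^5 - 420*t^6)*(- 2 - t + 3*t^2 - 3*t^3 + t^4) - 2*(2976 - 128*t - 21310*t^2 + 37524*t^3 - 27108*t^4 + 6832*t^5 + 282*t^6 - 60*t^7)*(- 1 + 6*t - 9*t^2 + 4*t^3) + ((-36)*(1 + t - t^2 + t^3) + (12)*(1 - 2*t + 3*t^2)*(t-(2)))*(- 2 - t + 3*t^2 - 3*t^3 + t^4)^2"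
  unfolding TT_def by (simp add: field_simps) algebra

lemma iden2: "(-24)^3*(t*(1-t)^3/(-24)) * TT 39083 (-2829) (-3106) (t*(1-t)^3/(-24)) 1 =
       3106*(- 24 - t + 3*t^2 - 3*t^3 + t^4)^3 + (- 1686528 - 1784016*t + 4765104*t^2 - 4651200*t^3 + 1546560*t^4 + 3600*t^5 - 1008*t^6)*(- 24 - t + 3*t^2 - 3*t^3 + t^4) - 2*(1382400 - 1686528*t - 892008*t^2 + 1588368*t^3 - 1162800*t^4 + 309312*t^5 + 600*t^6 - 144*t^7)*(- 1 + 6*t - 9*t^2 + 4*t^3) + ((-48)*(8 + 3*t + t^3) + (16)*(3 + 3*t^2)*(t-(3)))*(- 24 - t + 3*t^2 - 3*t^3 + t^4)^2"
  unfolding TT_def by (simp add: field_simps) algebra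

lemma iden3: "(-192)^3*(t*(1-t)^3/(-192)) * TT 442611 (41347) (-17434) (t*(1-t)^3/(-192)) 1 =
       17434*(- 192 - t + 3*t^2 - 3*t^3 + t^4)^3 + (- 631406592 - 134835840*t + 374099328*t^2 - 368813568*t^3 + 123056640*t^4 - 81792*t^5 + 13440*t^6)*(- 192 - t + 3*t^2 - 3*t^3 + t^4) - 2*(481296384 - 631406592*t - 67417920*t^2 + 124699776*t^3 - 92203392*t^4 + 24611328*t^5 - 13632*t^6 + 1920*t^7)*(- 1 + 6*t - 9*t^2 + 4*t^3) + ((-384)*(- 64 + 21*t - 6*t^2 + t^3) + (128)*(21 - 12*t + 3*t^2)*(t-(-3)))*(- 192 - t + 3*t^2 - 3*t^3 + t^4)^2"
  unfolding TT_def by (simp add: field_simps) algebra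

lemma inst1: "(\<lambda>k. (11319*real(k+1)^2 + (-497)*real(k+1) + (-746)) /
           ((4*real(k+1)+1) * (-2)^(k+1) * real((4*(k+1)) choose (k+1)))) sums (48 * ln 2 - 246)"
proof -
  define F where "F t = 746*t + (2976 - 128*t - 21310*t^2 + 37524*t^3 - 27108*t^4 + 6832*t^5 + 282*t^6 - 60*t^7)/(- 2 - t + 3*t^2 - 3*t^3 + t^4)^2 + (-36)*ln((-1)*(t-(2))) + (12)*ln((1)*(1 + t - t^2 + t^3))" for t :: real
  have "(\<lambda>k. (11319*real(k+1)^2 + (-497)*real(k+1) + (-746)) /
           ((4*real(k+1)+1) * (-2)^(k+1) * real((4*(k+1)) choose (k+1)))) sums (F 1 - F 0)"
  proof (rule main_gen)
    fix t :: real assume t: "t \<in> {0..1}"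
    have h1: "0 \<le> t" "t \<le> 1" using t by auto
    have h2: "t^2 \<le> t" using h1 by (simp add: power2_eq_square mult_left_le_one_le)
    have h3: "0 \<le> t^3" "t^3 \<le> 1" using h1 by (auto simp: power_le_one)
    have h4: "0 \<le> t^2" by simp
    have pos1: "(-1)*(t-(2)) > 0" using h1 by simp
    have pos2: "(1)*(1 + t - t^2 + t^3) > 0" using h1 h2 h3 h4 unfolding ring_distribs by linarith
    show "(F has_real_derivative
      ((t*(1-t)^3/(-2)) * TT 11319 (-497) (-746) (t*(1-t)^3/(-2)) 1 / (1 - t*(1-t)^3/(-2))^3)) (at t within {0..1})"
      unfolding F_def[abs_def]
    proof (rule gen_der[where B="\<lambda>t. (2976 - 128*t - 21310*t^2 + 37524*t^3 - 27108*t^4 + 6832*t^5 + 282*t^6 - 60*t^7)" and Bp="\<lambda>t. (- 128 - 42620*t + 112572*t^2 - 108432*t^3 + 34160*t^4 + 1692*t^5 - 420*t^6)" and D="\<lambda>t. (- 2 - t + 3*t^2 - 3*t^3 + t^4)" and Dp="\<lambda>t. (- 1 + 6*t - 9*t^2 + 4*t^3)"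
         and C="\<lambda>t. (1 + t - t^2 + t^3)" and Cp="\<lambda>t. (1 - 2*t + 3*t^2)" and r="(2)" and x="(-2)"])
      show "((\<lambda>t. (2976 - 128*t - 21310*t^2 + 37524*t^3 - 27108*t^4 + 6832*t^5 + 282*t^6 - 60*t^7)) has_real_derivative (- 128 - 42620*t + 112572*t^2 - 108432*t^3 + 34160*t^4 + 1692*t^5 - 420*t^6)) (at t)" for t :: real
        by (auto intro!: derivative_eq_intros)
      show "((\<lambda>t. (- 2 - t + 3*t^2 - 3*t^3 + t^4)) has_real_derivative (- 1 + 6*t - 9*t^2 + 4*t^3)) (at t)" for t :: real
        by (auto intro!: derivative_eq_intros)
      show "((\<lambda>t. (1 + t - t^2 + t^3)) has_real_derivative (1 - 2*t + 3*t^2)) (at t)" for t :: real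
        by (auto intro!: derivative_eq_intros)
      show "(- 2 - t + 3*t^2 - 3*t^3 + t^4) = (t-(2))*(1 + t - t^2 + t^3)" for t :: real by algebra
      show "(- 2 - t + 3*t^2 - 3*t^3 + t^4) = (-2) - t*(1-t)^3" for t :: real by algebra
    qed (use iden1 pos1 pos2 in auto)
  qed simp
  moreover have "F 1 - F 0 = 48 * ln 2 - 246" unfolding F_def by (simp add: ln_div)
  ultimately show ?thesis by simp
qed

lemma inst2: "(\<lambda>k. (39083*real(k+1)^2 + (-2829)*real(k+1) + (-3106)) /
           ((4*real(k+1)+1) * (-24)^(k+1) * real((4*(k+1)) choose (k+1)))) sums (-94 - 64 * ln (2/3))"
proof -
  define F where "F t = 3106*t + (1382400 - 1686528*t - 892008*t^2 + 1588368*t^3 - 1162800*t^4 + 309312*t^5 + 600*t^6 - 144*t^7)/(- 24 - t + 3*t^2 - 3*t^3 + t^4)^2 + (-48)*ln((-1/3)*(t-(3))) + (16)*ln((1/8)*(8 + 3*t + t^3))" for t :: real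
  have "(\<lambda>k. (39083*real(k+1)^2 + (-2829)*real(k+1) + (-3106)) /
           ((4*real(k+1)+1) * (-24)^(k+1) * real((4*(k+1)) choose (k+1)))) sums (F 1 - F 0)"
  proof (rule main_gen)
    fix t :: real assume t: "t \<in> {0..1}"
    have h1: "0 \<le> t" "t \<le> 1" using t by auto
    have h2: "t^2 \<le> t" using h1 by (simp add: power2_eq_square mult_left_le_one_le)
    have h3: "0 \<le> t^3" "t^3 \<le> 1" using h1 by (auto simp: power_le_one)
    have h4: "0 \<le> t^2" by simp
    have pos1: "(-1/3)*(t-(3)) > 0" using h1 by simp
    have pos2: "(1/8)*(8 + 3*t + t^3) > 0" using h1 h2 h3 h4 unfolding ring_distribs by linarith
    show "(F has_real_derivative
      ((t*(1-t)^3/(-24)) * TT 39083 (-2829) (-3106) (t*(1-t)^3/(-24)) 1 / (1 - t*(1-t)^3/(-24))^3)) (at t within {0..1})"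
      unfolding F_def[abs_def]
    proof (rule gen_der[where B="\<lambda>t. (1382400 - 1686528*t - 892008*t^2 + 1588368*t^3 - 1162800*t^4 + 309312*t^5 + 600*t^6 - 144*t^7)" and Bp="\<lambda>t. (- 1686528 - 1784016*t + 4765104*t^2 - 4651200*t^3 + 1546560*t^4 + 3600*t^5 - 1008*t^6)" and D="\<lambda>t. (- 24 - t + 3*t^2 - 3*t^3 + t^4)" and Dp="\<lambda>t. (- 1 + 6*t - 9*t^2 + 4*t^3)"
         and C="\<lambda>t. (8 + 3*t + t^3)" and Cp="\<lambda>t. (3 + 3*t^2)" and r="(3)" and x="(-24)"])
      show "((\<lambda>t. (1382400 - 1686528*t - 892008*t^2 + 1588368*t^3 - 1162800*t^4 + 309312*t^5 + 600*t^6 - 144*t^7)) has_real_derivative (- 1686528 - 1784016*t + 4765104*t^2 - 4651200*t^3 + 1546560*t^4 + 3600*t^5 - 1008*t^6)) (at t)" for t :: real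
        by (auto intro!: derivative_eq_intros)
      show "((\<lambda>t. (- 24 - t + 3*t^2 - 3*t^3 + t^4)) has_real_derivative (- 1 + 6*t - 9*t^2 + 4*t^3)) (at t)" for t :: real
        by (auto intro!: derivative_eq_intros)
      show "((\<lambda>t. (8 + 3*t + t^3)) has_real_derivative (3 + 3*t^2)) (at t)" for t :: real
        by (auto intro!: derivative_eq_intros)
      show "(- 24 - t + 3*t^2 - 3*t^3 + t^4) = (t-(3))*(8 + 3*t + t^3)" for t :: real by algebra
      show "(- 24 - t + 3*t^2 - 3*t^3 + t^4) = (-24) - t*(1-t)^3" for t :: real by algebra
    qed (use iden2 pos1 pos2 in auto)
  qed simp
  moreover have "F 1 - F 0 = -94 - 64 * ln (2/3)" unfolding F_def by (simp add: ln_div)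
  ultimately show ?thesis by simp
qed

lemma inst3: "(\<lambda>k. (442611*real(k+1)^2 + (41347)*real(k+1) + (-17434)) /
           ((4*real(k+1)+1) * (-192)^(k+1) * real((4*(k+1)) choose (k+1)))) sums (26 + 512 * ln (3/4))"
proof -
  define F where "F t = 17434*t + (481296384 - 631406592*t - 67417920*t^2 + 124699776*t^3 - 92203392*t^4 + 24611328*t^5 - 13632*t^6 + 1920*t^7)/(- 192 - t + 3*t^2 - 3*t^3 + t^4)^2 + (-384)*ln((1/3)*(t-(-3))) + (128)*ln((-1/64)*(- 64 + 21*t - 6*t^2 + t^3))" for t :: real
  have "(\<lambda>k. (442611*real(k+1)^2 + (41347)*real(k+1) + (-17434)) /
           ((4*real(k+1)+1) * (-192)^(k+1) * real((4*(k+1)) choose (k+1)))) sums (F 1 - F 0)"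
  proof (rule main_gen)
    fix t :: real assume t: "t \<in> {0..1}"
    have h1: "0 \<le> t" "t \<le> 1" using t by auto
    have h2: "t^2 \<le> t" using h1 by (simp add: power2_eq_square mult_left_le_one_le)
    have h3: "0 \<le> t^3" "t^3 \<le> 1" using h1 by (auto simp: power_le_one)
    have h4: "0 \<le> t^2" by simp
    have pos1: "(1/3)*(t-(-3)) > 0" using h1 by simp
    have pos2: "(-1/64)*(- 64 + 21*t - 6*t^2 + t^3) > 0" using h1 h2 h3 h4 unfolding ring_distribs by linarith
    show "(F has_real_derivative
      ((t*(1-t)^3/(-192)) * TT 442611 (41347) (-17434) (t*(1-t)^3/(-192)) 1 / (1 - t*(1-t)^3/(-192))^3)) (at t within {0..1})"
      unfolding F_def[abs_def]
    proof (rule gen_der[where B="\<lambda>t. (481296384 - 631406592*t - 67417920*t^2 + 124699776*t^3 - 92203392*t^4 + 24611328*t^5 - 13632*t^6 + 1920*t^7)" and Bp="\<lambda>t. (- 631406592 - 134835840*t + 374099328*t^2 - 368813568*t^3 + 123056640*t^4 - 81792*t^5 + 13440*t^6)" and D="\<lambda>t. (- 192 - t + 3*t^2 - 3*t^3 + t^4)" and Dp="\<lambda>t. (- 1 + 6*t - 9*t^2 + 4*t^3)"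
         and C="\<lambda>t. (- 64 + 21*t - 6*t^2 + t^3)" and Cp="\<lambda>t. (21 - 12*t + 3*t^2)" and r="(-3)" and x="(-192)"])
      show "((\<lambda>t. (481296384 - 631406592*t - 67417920*t^2 + 124699776*t^3 - 92203392*t^4 + 24611328*t^5 - 13632*t^6 + 1920*t^7)) has_real_derivative (- 631406592 - 134835840*t + 374099328*t^2 - 368813568*t^3 + 123056640*t^4 - 81792*t^5 + 13440*t^6)) (at t)" for t :: real
        by (auto intro!: derivative_eq_intros)
      show "((\<lambda>t. (- 192 - t + 3*t^2 - 3*t^3 + t^4)) has_real_derivative (- 1 + 6*t - 9*t^2 + 4*t^3)) (at t)" for t :: real
        by (auto intro!: derivative_eq_intros)
      show "((\<lambda>t. (- 64 + 21*t - 6*t^2 + t^3)) has_real_derivative (21 - 12*t + 3*t^2)) (at t)" for t :: real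
        by (auto intro!: derivative_eq_intros)
      show "(- 192 - t + 3*t^2 - 3*t^3 + t^4) = (t-(-3))*(- 64 + 21*t - 6*t^2 + t^3)" for t :: real by algebra
      show "(- 192 - t + 3*t^2 - 3*t^3 + t^4) = (-192) - t*(1-t)^3" for t :: real by algebra
    qed (use iden3 pos1 pos2 in auto)
  qed simp
  moreover have "F 1 - F 0 = 26 + 512 * ln (3/4)" unfolding F_def by (simp add: ln_div)
  ultimately show ?thesis by simp
qed
theorem lemma3p3:
  shows "((\<lambda>k::nat. (11319 * real (k+1)^2 - 497 * real (k+1) - 746) /
            ((4 * real (k+1) + 1) * (-2) ^ (k+1) * real ((4*(k+1)) choose (k+1))))
           sums (48 * ln 2 - 246)) \<and>
        ((\<lambda>k::nat. (39083 * real (k+1)^2 - 2829 * real (k+1) - 3106) /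
            ((4 * real (k+1) + 1) * (-24) ^ (k+1) * real ((4*(k+1)) choose (k+1))))
           sums (-94 - 64 * ln (2/3))) \<and>
        ((\<lambda>k::nat. (442611 * real (k+1)^2 + 41347 * real (k+1) - 17434) /
            ((4 * real (k+1) + 1) * (-192) ^ (k+1) * real ((4*(k+1)) choose (k+1))))
           sums (26 + 512 * ln (3/4)))"
  using inst1 inst2 inst3 by simp

end
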